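(* Let $G$ be a connected graph of minimum degree at least three and let $(A,B)$ be a partition of $V(G)$ with $A\neq\emptyset$ and $B\neq\emptyset$. Let $C$ be any cycle in $G$. Then, unless $G$ is bipartite with bipartition $(A,B)$ (i.e. every edge of $G$ has one end in $A$ and the other in $B$), for every integer $\ell$ with $1\leq \ell<|V(C)|$ there is an $A$-$B$ path of length $\ell$ in $G$.
   Context: Graphs are finite and simple. An $A$-$B$ path is a path with one end in $A$ and the other end in $B$. The length of a path is its number of edges. *)

theory Defs
  imports Main
begin

definition simple_graph :: "'a set \<Rightarrow> ('a \<Rightarrow> 'a \<Rightarrow> bool) \<Rightarrow> bool" where
  "simple_graph V E \<longleftrightarrow> finite V \<and> (\<forall>x y. E x y \<longrightarrow> x \<in> V \<and> y \<in> V)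
     \<and> (\<forall>x y. E x y \<longrightarrow> E y x) \<and> (\<forall>x. \<not> E x x)"

fun walk_edges :: "('a \<Rightarrow> 'a \<Rightarrow> bool) \<Rightarrow> 'a list \<Rightarrow> bool" where
  "walk_edges E (x # y # xs) = (E x y \<and> walk_edges E (y # xs))"
| "walk_edges E _ = True"

definition is_path :: "'a set \<Rightarrow> ('a \<Rightarrow> 'a \<Rightarrow> bool) \<Rightarrow> 'a list \<Rightarrow> bool" where
  "is_path V E p \<longleftrightarrow> p \<noteq> [] \<and> distinct p \<and> set p \<subseteq> V \<and> walk_edges E p"

definition path_length :: "'a list \<Rightarrow> nat" where
  "path_length p = length p - 1"

definition is_AB_path :: "'a set \<Rightarrow> ('a \<Rightarrow> 'a \<Rightarrow> bool) \<Rightarrow> 'a set \<Rightarrow> 'a set \<Rightarrow> 'a list \<Rightarrow> bool" where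
  "is_AB_path V E A B p \<longleftrightarrow> is_path V E p \<and>
     ((hd p \<in> A \<and> last p \<in> B) \<or> (hd p \<in> B \<and> last p \<in> A))"

definition is_cycle :: "'a set \<Rightarrow> ('a \<Rightarrow> 'a \<Rightarrow> bool) \<Rightarrow> 'a list \<Rightarrow> bool" where
  "is_cycle V E c \<longleftrightarrow> length c \<ge> 3 \<and> distinct c \<and> set c \<subseteq> V \<and> walk_edges E c
     \<and> E (last c) (hd c)"

definition connected_graph :: "'a set \<Rightarrow> ('a \<Rightarrow> 'a \<Rightarrow> bool) \<Rightarrow> bool" where
  "connected_graph V E \<longleftrightarrow> V \<noteq> {} \<and>
     (\<forall>x\<in>V. \<forall>y\<in>V. \<exists>p. is_path V E p \<and> hd p = x \<and> last p = y)"

definition degree :: "'a set \<Rightarrow> ('a \<Rightarrow> 'a \<Rightarrow> bool) \<Rightarrow> 'a \<Rightarrow> nat" where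
  "degree V E x = card {y \<in> V. E x y}"

definition bipartite_with :: "('a \<Rightarrow> 'a \<Rightarrow> bool) \<Rightarrow> 'a set \<Rightarrow> 'a set \<Rightarrow> bool" where
  "bipartite_with E A B \<longleftrightarrow> (\<forall>x y. E x y \<longrightarrow> (x \<in> A \<and> y \<in> B) \<or> (x \<in> B \<and> y \<in> A))"

end

theory Submission
  imports Defs
begin

lemma walk_edges_Cons: "walk_edges E (x # xs) = (xs = [] \<or> (E x (hd xs) \<and> walk_edges E xs))"
  by (cases xs) auto

lemma walk_edges_append:
  "walk_edges E (xs @ ys) = (walk_edges E xs \<and> walk_edges E ys \<and> (xs \<noteq> [] \<longrightarrow> ys \<noteq> [] \<longrightarrow> E (last xs) (hd ys)))"
  by (induction xs) (auto simp: walk_edges_Cons)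

lemma walk_edges_rev:
  assumes "\<And>x y. E x y \<Longrightarrow> E y x"
  shows "walk_edges E (rev xs) = walk_edges E xs"
  by (induction xs) (auto simp: walk_edges_Cons walk_edges_append hd_rev last_rev intro: assms)

lemma walk_edges_nth: "walk_edges E xs \<Longrightarrow> i + 1 < length xs \<Longrightarrow> E (xs ! i) (xs ! (i+1))"
proof (induction xs arbitrary: i)
  case Nil then show ?case by simp
next
  case (Cons x xs)
  then show ?case by (cases i) (auto simp: walk_edges_Cons hd_conv_nth)
qed

lemma walk_edges_take: "walk_edges E xs \<Longrightarrow> walk_edges E (take k xs)"
  by (metis append_take_drop_id walk_edges_append)

lemma walk_edges_drop: "walk_edges E xs \<Longrightarrow> walk_edges E (drop k xs)"
  by (metis append_take_drop_id walk_edges_append)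

lemma periodic_mod:
  fixes g :: "int \<Rightarrow> 'b"
  assumes d: "d > 0" and per: "\<And>t. g (t + d) = g t"
  shows "g t = g (t mod d)"
proof -
  have A: "g (s + int k * d) = g s" for s k
    by (induction k) (auto simp: algebra_simps per[of "s + int _ * d", simplified algebra_simps] )
  have t: "t = t mod d + (t div d) * d" by simp
  show ?thesis
  proof (cases "t div d \<ge> 0")
    case True
    then have "g (t mod d + int (nat (t div d)) * d) = g (t mod d)" using A by blast
    then show ?thesis using True t by simp
  next
    case False
    then have "g (t + int (nat (- (t div d))) * d) = g t" using A by blast
    moreover have "t + int (nat (- (t div d))) * d = t mod d" using False t by (simp add: algebra_simps)
    ultimately show ?thesis by simp
  qed
qed

lemma first_hit:
  assumes "is_path V E p" "last p \<in> S"
  shows "\<exists>Q. is_path V E Q \<and> hd Q = hd p \<and> last Q \<in> S \<and> set Q \<subseteq> set p \<and> (\<forall>q\<in>set (butlast Q). q \<notin> S)"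
  using assms
proof (induction p)
  case Nil then show ?case by (simp add: is_path_def)
next
  case (Cons x xs)
  show ?case
  proof (cases "x \<in> S \<or> xs = []")
    case True
    then have "is_path V E [x]" using Cons.prems by (auto simp: is_path_def)
    then show ?thesis using True Cons.prems by (intro exI[of _ "[x]"]) auto
  next
    case False
    then have xs: "xs \<noteq> []" "x \<notin> S" by auto
    have "is_path V E xs" using Cons.prems xs by (auto simp: is_path_def walk_edges_Cons)
    moreover have "last xs \<in> S" using Cons.prems xs by simp
    ultimately obtain Q where Q: "is_path V E Q" "hd Q = hd xs" "last Q \<in> S" "set Q \<subseteq> set xs"
      "\<forall>q\<in>set (butlast Q). q \<notin> S" using Cons.IH by blast
    have Qne: "Q \<noteq> []" using Q(1) by (simp add: is_path_def)
    have "x \<notin> set Q" using Q(4) Cons.prems(1) by (auto simp: is_path_def)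
    then have "is_path V E (x # Q)" using Q Qne Cons.prems(1) xs
      by (auto simp: is_path_def walk_edges_Cons)
    then show ?thesis using Q Qne xs by (intro exI[of _ "x # Q"]) auto
  qed
qed

lemma bichrom_edge:
  assumes "walk_edges E p" "p \<noteq> []" "hd p \<in> A" "last p \<notin> A"
  shows "\<exists>u v. E u v \<and> u \<in> A \<and> v \<notin> A"
  using assms
proof (induction p)
  case Nil then show ?case by simp
next
  case (Cons x xs)
  then show ?case by (cases xs) (auto simp: walk_edges_Cons split: if_splits)
qed


locale setting =
  fixes V :: "'a set" and E :: "'a \<Rightarrow> 'a \<Rightarrow> bool" and A B :: "'a set" and C :: "'a list" and l :: nat
  assumes sg: "simple_graph V E"
    and conn: "connected_graph V E"
    and deg: "\<forall>x\<in>V. degree V E x \<ge> 3"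
    and AB: "A \<union> B = V" and disj: "A \<inter> B = {}" and Ane: "A \<noteq> {}" and Bne: "B \<noteq> {}"
    and cyc: "is_cycle V E C"
    and nbip: "\<not> bipartite_with E A B"
    and l1: "1 \<le> l" and ln: "l < length C"
    and NG: "\<And>p. is_path V E p \<Longrightarrow> path_length p = l \<Longrightarrow> (hd p \<in> A \<longleftrightarrow> last p \<in> A)"
begin

abbreviation n where "n \<equiv> length C"

definition c :: "int \<Rightarrow> 'a" where "c t = C ! nat (t mod int n)"
definition f :: "int \<Rightarrow> bool" where "f t = (c t \<in> A)"

lemma Esym: "E x y \<Longrightarrow> E y x" using sg by (auto simp: simple_graph_def)
lemma EV: "E x y \<Longrightarrow> x \<in> V \<and> y \<in> V" using sg by (auto simp: simple_graph_def)
lemma Eirr: "\<not> E x x" using sg by (auto simp: simple_graph_def)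

lemma n3: "n \<ge> 3" using cyc by (simp add: is_cycle_def)
lemma Cdist: "distinct C" using cyc by (simp add: is_cycle_def)
lemma CV: "set C \<subseteq> V" using cyc by (simp add: is_cycle_def)

lemma Cne: "C \<noteq> []" using n3 by (cases C) auto
lemma npos: "0 < int n" using n3 by linarith
lemma modge: "0 \<le> t mod int n" using npos by simp

lemma modlt: "nat (t mod int n) < n"
proof -
  have "t mod int n < int n" "0 \<le> t mod int n" using npos by simp_all
  then show ?thesis by (simp add: nat_less_iff)
qed

lemma c_in: "c t \<in> set C"
proof -
  have "nat (t mod int n) < n" by (rule modlt)
  then show ?thesis by (simp add: c_def)
qed

lemma c_V: "c t \<in> V" using c_in CV by auto

lemma c_nat: "i < n \<Longrightarrow> c (int i) = C ! i"
  by (simp add: c_def)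

lemma c_mod: "c (t mod int n) = c t" by (simp add: c_def)

lemma c_eq_iff: "c s = c t \<longleftrightarrow> s mod int n = t mod int n"
proof -
  have a: "nat (s mod int n) < n" "nat (t mod int n) < n" by (rule modlt)+
  have "c s = c t \<longleftrightarrow> nat (s mod int n) = nat (t mod int n)"
    unfolding c_def using nth_eq_iff_index_eq[OF Cdist a] .
  also have "\<dots> \<longleftrightarrow> s mod int n = t mod int n" using modge[of s] modge[of t] by (simp add: eq_nat_nat_iff)
  finally show ?thesis .
qed

lemma c_inj: "lo \<le> s \<Longrightarrow> s < lo + int n \<Longrightarrow> lo \<le> t \<Longrightarrow> t < lo + int n \<Longrightarrow> c s = c t \<Longrightarrow> s = t"
proof -
  assume a: "lo \<le> s" "s < lo + int n" "lo \<le> t" "t < lo + int n" "c s = c t"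
  then have "int n dvd (s - t)" unfolding c_eq_iff by (simp add: mod_eq_dvd_iff)
  moreover have "\<bar>s - t\<bar> < int n" using a(1-4) by linarith
  ultimately have "s - t = 0" using dvd_imp_le_int[of "s - t" "int n"] by fastforce
  then show ?thesis by simp
qed

lemma c_edge: "E (c t) (c (t + 1))"
proof -
  define i where "i = nat (t mod int n)"
  have i: "i < n" "int i = t mod int n" using modlt modge by (simp_all add: i_def)
  show ?thesis
  proof (cases "i + 1 < n")
    case True
    have "(t + 1) mod int n = (t mod int n + 1) mod int n" by (simp add: mod_add_left_eq)
    also have "\<dots> = int (i + 1)" using i True by (simp add: mod_pos_pos_trivial)
    finally have "(t + 1) mod int n = int (i + 1)" .
    then have "c (t+1) = C ! (i+1)" unfolding c_def by (metis nat_int)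
    moreover have "c t = C ! i" by (simp add: c_def i_def)
    ultimately show ?thesis using walk_edges_nth[of E C i] cyc True by (simp add: is_cycle_def)
  next
    case False
    then have ii: "i = n - 1" using i by simp
    have e1: "(t + 1) mod int n = (t mod int n + 1) mod int n" by (simp add: mod_add_left_eq)
    have "t mod int n + 1 = int n" using i ii n3 by linarith
    then have "(t + 1) mod int n = 0" using e1 by simp
    then have "c (t+1) = hd C" using Cne by (simp add: c_def hd_conv_nth)
    moreover have "c t = last C" using Cne ii by (simp add: c_def i_def[symmetric] last_conv_nth)
    ultimately show ?thesis using cyc by (simp add: is_cycle_def)
  qed
qed

end

context setting begin

lemma walk_arc: "walk_edges E (map c [a..b])"
proof (induction a b rule: upto.induct)
  case (1 i j)
  show ?case
  proof (cases "i \<le> j")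
    case True
    then have eq: "[i..j] = i # [i+1..j]" by (simp add: upto.simps)
    show ?thesis
    proof (cases "i + 1 \<le> j")
      case True
      then have "hd (map c [i+1..j]) = c (i+1)" by (simp add: upto.simps)
      then show ?thesis using eq 1 True c_edge by (auto simp: walk_edges_Cons)
    next
      case False
      then show ?thesis using eq by simp
    qed
  next
    case False
    then show ?thesis by simp
  qed
qed

lemma hd_upto: "a \<le> b \<Longrightarrow> hd [a..b] = a" by (simp add: upto.simps)
lemma last_upto: "a \<le> b \<Longrightarrow> last [a..b] = b" by (simp add: upto_rec2)

lemma GL:
  assumes Q: "is_path V E Q" and lQ: "last Q = c (hd ts)" and bl: "\<forall>q\<in>set (butlast Q). q \<notin> set C"
    and ts: "ts \<noteq> []" "distinct ts" "\<forall>t\<in>set ts. lo \<le> t \<and> t < lo + int n" "walk_edges E (map c ts)"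
    and len: "length Q + length ts = l + 2"
  shows "(hd Q \<in> A) = f (last ts)"
proof -
  have Qne: "Q \<noteq> []" using Q by (simp add: is_path_def)
  have Qsplit: "Q = butlast Q @ [last Q]" using Qne by simp
  let ?p = "butlast Q @ map c ts"
  have inj: "inj_on c (set ts)" using ts(3) c_inj unfolding inj_on_def by blast
  have dQ: "distinct Q" using Q by (simp add: is_path_def)
  have d: "distinct ?p" using distinct_butlast[OF dQ] inj ts(2) bl c_in
    by (auto simp: distinct_map)
  have s: "set ?p \<subseteq> V" using Q c_V by (auto simp: is_path_def dest: in_set_butlastD)
  have wQ: "walk_edges E (butlast Q @ [last Q])" using Q Qsplit by (simp add: is_path_def)
  then have w1: "walk_edges E (butlast Q)" "butlast Q \<noteq> [] \<Longrightarrow> E (last (butlast Q)) (last Q)"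
    by (simp_all only: walk_edges_append) auto
  have hdm: "hd (map c ts) = last Q" using ts(1) lQ by (simp add: hd_map)
  have w: "walk_edges E ?p" using w1 ts(4) hdm ts(1) by (simp add: walk_edges_append)
  have path: "is_path V E ?p" using d s w ts(1) by (simp add: is_path_def)
  have lq: "0 < length Q" "0 < length ts" using Qne ts(1) by auto
  have pl: "path_length ?p = l" unfolding path_length_def length_append length_butlast length_map
    using len lq by linarith
  have hp: "hd ?p = hd Q"
  proof (cases "butlast Q = []")
    case True
    then have "Q = [last Q]" using Qsplit by simp
    then show ?thesis using True hdm ts(1) by (metis append_Nil list.sel(1))
  next
    case False
    then show ?thesis by (metis Qsplit hd_append2)
  qed
  have lp: "last ?p = c (last ts)" using ts(1) by (simp add: last_map)
  show ?thesis using NG[OF path pl] hp lp by (simp add: f_def)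
qed

lemma IP:
  assumes ts: "ts \<noteq> []" "distinct ts" "\<forall>t\<in>set ts. lo \<le> t \<and> t < lo + int n" "walk_edges E (map c ts)"
    and len: "length ts = l + 1"
  shows "f (hd ts) = f (last ts)"
proof -
  have "is_path V E [c (hd ts)]" using c_V by (simp add: is_path_def)
  from GL[OF this _ _ ts] len show ?thesis by (simp add: f_def)
qed

lemma W: "f t = f (t + int l)"
proof -
  have "f (hd [t..t + int l]) = f (last [t..t + int l])"
    by (rule IP[where lo=t]) (use ln in \<open>auto simp: walk_arc\<close>)
  then show ?thesis by (simp add: hd_upto last_upto)
qed

lemma fn: "f (t + int n) = f t"
proof -
  have "c (t + int n) = c t" by (simp add: c_eq_iff)
  then show ?thesis by (simp add: f_def)
qed

lemma Wm: "f (t - int l) = f t" using W[of "t - int l"] by simp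

lemma Wp: "f (t + (int n - int l)) = f t"
proof -
  have "f (t + (int n - int l)) = f (t + (int n - int l) + int l)" by (rule W)
  also have "\<dots> = f t" using fn by simp
  finally show ?thesis .
qed

end

context setting begin

lemma walk_rarc: "walk_edges E (map c (rev [a..b]))"
  using walk_arc walk_edges_rev[of E, OF Esym] by (metis rev_map)

lemma TA:
  assumes "xs \<noteq> []" "ys \<noteq> []" "distinct xs" "distinct ys" "set xs \<inter> set ys = {}"
    "walk_edges E (map c xs)" "walk_edges E (map c ys)" "E (c (last xs)) (c (hd ys))"
    "\<forall>t\<in>set xs \<union> set ys. lo \<le> t \<and> t < lo + int n"
    "length xs + length ys = l + 1"
  shows "f (hd xs) = f (last ys)"
proof -
  have "f (hd (xs @ ys)) = f (last (xs @ ys))"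
    by (rule IP[where lo=lo]) (use assms in \<open>auto simp: walk_edges_append last_map hd_map\<close>)
  then show ?thesis using assms(1,2) by simp
qed

lemma F1:
  assumes e: "E (c a) (c (a + j))" and "0 \<le> x" "x < j" "0 \<le> y" "j + y \<le> int n - 1" "x + y + 1 = int l"
  shows "f (a + x) = f (a + j + y)"
proof -
  have "f (hd (rev [a..a+x])) = f (last [a+j..a+j+y])"
    by (rule TA[where lo=a]) (use assms in \<open>auto simp: walk_arc walk_rarc last_rev hd_upto hd_rev last_upto\<close>)
  then show ?thesis using assms by (simp add: hd_rev last_upto)
qed

lemma F2:
  assumes e: "E (c a) (c (a + j))" and "0 \<le> x" "0 \<le> y" "y < j" "j + x \<le> int n - 1" "x + y + 1 = int l"
  shows "f (a - x) = f (a + j - y)"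
proof -
  have "f (hd [a-x..a]) = f (last (rev [a+j-y..a+j]))"
    by (rule TA[where lo="a-x"]) (use assms in \<open>auto simp: walk_arc walk_rarc last_rev hd_upto hd_rev last_upto\<close>)
  then show ?thesis using assms by (simp add: last_rev hd_upto)
qed

lemma F3:
  assumes e: "E (c a) (c (a + j))" and "1 \<le> j" "0 \<le> y" "j + y \<le> int n - 2" "y + 2 = int l"
  shows "f (a - 1) = f (a + j + y)"
proof -
  have "f (hd [a-1..a]) = f (last [a+j..a+j+y])"
    by (rule TA[where lo="a-1"]) (use assms in \<open>auto simp: walk_arc walk_rarc last_rev hd_upto hd_rev last_upto\<close>)
  then show ?thesis using assms by (simp add: last_upto hd_upto)
qed

lemma F4:
  assumes e: "E (c a) (c (a + j))" and "0 \<le> y" "y + 2 \<le> j" "j \<le> int n - 1" "y + 2 = int l"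
  shows "f (a + 1) = f (a + j - y)"
proof -
  have "f (hd (rev [a..a+1])) = f (last (rev [a+j-y..a+j]))"
    by (rule TA[where lo="a"]) (use assms in \<open>auto simp: walk_arc walk_rarc last_rev hd_upto hd_rev last_upto\<close>)
  then show ?thesis using assms by (simp add: last_rev hd_upto hd_rev last_upto)
qed

end

lemma per_extend:
  fixes g :: "int \<Rightarrow> bool"
  assumes p: "p > 0" and per: "\<And>s. g (s + p) = g s" and base: "\<And>s. 0 \<le> s \<Longrightarrow> s < p \<Longrightarrow> g s"
  shows "g s"
proof -
  have "g s = g (s mod p)" by (rule periodic_mod[of p g, OF p per])
  moreover have "g (s mod p)" using base p by simp
  ultimately show ?thesis by simp
qed

context setting begin

lemma third_nb:
  assumes "v \<in> V"
  obtains w where "E v w" "w \<noteq> x" "w \<noteq> y"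
proof -
  let ?N = "{z \<in> V. E v z}"
  have fin: "finite V" using sg by (simp add: simple_graph_def)
  have "card ?N \<ge> 3" using deg assms by (auto simp: degree_def)
  moreover have "\<not> ?N \<subseteq> {x, y}"
  proof
    assume "?N \<subseteq> {x, y}"
    then have "card ?N \<le> card {x, y}" by (intro card_mono) auto
    also have "\<dots> \<le> 2" by (simp add: card_insert_le_m1)
    finally show False using \<open>card ?N \<ge> 3\<close> by simp
  qed
  then show ?thesis using that by blast
qed

lemma notsw: "f (i - 1) = f (i + 1)"
proof (rule ccontr)
  assume h: "f (i - 1) \<noteq> f (i + 1)"
  have l2: "l \<ge> 2"
  proof (rule ccontr)
    assume "\<not> l \<ge> 2"
    then have "l = 1" using l1 by simp
    then show False using h W[of "i - 1"] W[of i] by simp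
  qed
  obtain w where w: "E (c i) w" "w \<noteq> c (i - 1)" "w \<noteq> c (i + 1)"
    using third_nb[OF c_V] by blast
  have wV: "w \<in> V" using EV w(1) by blast
  show False
  proof (cases "w \<in> set C")
    case False
    have Q: "is_path V E [w, c i]" using False c_in wV c_V Esym[OF w(1)]
      by (auto simp: is_path_def)
    have "(hd [w, c i] \<in> A) = f (last [i..i + int l - 1])"
      by (rule GL[OF Q, where lo=i]) (use False l1 ln in \<open>auto simp: hd_upto walk_arc\<close>)
    then have a1: "(w \<in> A) = f (i - 1)" using l1 W[of "i - 1"] by (simp add: last_upto algebra_simps)
    have "(hd [w, c i] \<in> A) = f (last (rev [i - int l + 1..i]))"
      by (rule GL[OF Q, where lo="i - int l + 1"]) (use False l1 ln in \<open>auto simp: hd_upto hd_rev last_upto walk_rarc\<close>)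
    then have a2: "(w \<in> A) = f (i + 1)" using l1 W[of "i - int l + 1"] by (simp add: last_rev hd_upto algebra_simps)
    show False using a1 a2 h by simp
  next
    case True
    then obtain m where m: "m < n" "C ! m = w" by (auto simp: in_set_conv_nth)
    define j where "j = (int m - i) mod int n"
    have j0: "0 \<le> j" "j < int n" using npos by (simp_all add: j_def)
    have cj: "c (i + j) = w"
    proof -
      have "c (i + j) = c (int m)" unfolding c_eq_iff j_def by (simp add: mod_add_right_eq)
      then show ?thesis using m c_nat by simp
    qed
    have e: "E (c i) (c (i + j))" using cj w by simp
    have "j \<noteq> 0" using e Eirr by (metis add.right_neutral)
    moreover have "j \<noteq> 1" using cj w by auto
    moreover have "j \<noteq> int n - 1"
    proof
      assume "j = int n - 1"
      then have "i + j = (i - 1) + int n" by simp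
      then have "(i + j) mod int n = (i - 1) mod int n" by (simp only: mod_add_self2)
      then have "c (i + j) = c (i - 1)" unfolding c_eq_iff .
      then show False using cj w by simp
    qed
    ultimately have j2: "2 \<le> j" "j \<le> int n - 2" using j0 by auto
    consider "j \<le> int n - int l" | "int l \<le> j" | "int n - int l < j" "j < int l" by linarith
    then show False
    proof cases
      case 1
      have "f (i + 1) = f (i + j + (int l - 2))"
        by (rule F1[OF e]) (use 1 l2 j2 in auto)
      moreover have "f (i - 1) = f (i + j + (int l - 2))"
        by (rule F3[OF e]) (use 1 l2 j2 in auto)
      ultimately show False using h by simp
    next
      case 2
      have "f (i - 1) = f (i + j - (int l - 2))"
        by (rule F2[OF e]) (use 2 l2 j2 in auto)
      moreover have "f (i + 1) = f (i + j - (int l - 2))"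
        by (rule F4[OF e]) (use 2 l2 j2 in auto)
      ultimately show False using h by simp
    next
      case 3
      define p where "p = int n - int l"
      have p0: "p > 0" using ln by (simp add: p_def)
      have Wp': "f (t + p) = f t" for t using Wp by (simp add: p_def)
      have phi1: "f (i + x) = f (i + j - 1 - x)" for x
      proof -
        define g where "g = (\<lambda>s. f (i + (j - p) + s) = f (i + j - 1 - (j - p) - s))"
        have "g s" for s
        proof (rule per_extend[OF p0])
          fix s
          show "g (s + p) = g s" unfolding g_def
            using Wp'[of "i + (j - p) + s"] Wp'[of "i + j - 1 - (j - p) - s - p"]
            by (simp add: algebra_simps)
        next
          fix s assume s: "0 \<le> s" "s < p"
          have "f (i + (j - p + s)) = f (i + j + (int l - 1 - (j - p + s)))"
            by (rule F1[OF e]) (use s 3 p_def in auto)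
          moreover have "f (i + j - 1 - (j - p + s)) = f (i + j - 1 - (j - p + s) + int l)" by (rule W)
          ultimately show "g s" unfolding g_def by (simp add: algebra_simps)
        qed
        from this[of "x - (j - p)"] show ?thesis unfolding g_def by (simp add: algebra_simps)
      qed
      have phi2: "f (i - x) = f (i + j + 1 + x)" for x
      proof -
        define g where "g = (\<lambda>s. f (i - (int l - j + s)) = f (i + j + 1 + (int l - j + s)))"
        have "g s" for s
        proof (rule per_extend[OF p0])
          fix s
          show "g (s + p) = g s" unfolding g_def
            using Wp'[of "i - (int l - j + s) - p"] Wp'[of "i + j + 1 + (int l - j + s)"]
            by (simp add: algebra_simps)
        next
          fix s assume s: "0 \<le> s" "s < p"
          have "f (i - (int l - j + s)) = f (i + j - (int l - 1 - (int l - j + s)))"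
            by (rule F2[OF e]) (use s 3 p_def in auto)
          moreover have "f (i + j - (int l - 1 - (int l - j + s))) = f (i + j - (int l - 1 - (int l - j + s)) + int l)" by (rule W)
          ultimately show "g s" unfolding g_def by (simp add: algebra_simps)
        qed
        from this[of "x - (int l - j)"] show ?thesis unfolding g_def by (simp add: algebra_simps)
      qed
      have "f (i + 1) = f (i + j)" using phi2[of "-1"] by simp
      moreover have "f (i - 1) = f (i + j)" using phi1[of "-1"] by simp
      ultimately show False using h by simp
    qed
  qed
qed

end

context setting begin

lemma f2: "f t = f (t mod 2)"
proof -
  have h: "f (s + 2) = f s" for s using notsw[of "s + 1"] by (simp add: algebra_simps)
  show ?thesis by (rule periodic_mod[of 2 f, OF _ h]) simp
qed

lemma mod2: "t mod 2 = 0 \<or> t mod 2 = (1::int)" by presburger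

lemma f01: "f s = (if s mod 2 = 0 then f 0 else f 1)"
proof (cases "s mod 2 = 0")
  case True
  have "f s = f (s mod 2)" by (rule f2)
  then show ?thesis using True by simp
next
  case False
  then have m: "s mod 2 = 1" using mod2[of s] by simp
  have "f s = f (s mod 2)" by (rule f2)
  then show ?thesis using m by simp
qed

lemma fconst: "f 0 = f 1 \<Longrightarrow> f t = f 0"
  using f01[of t] by (simp split: if_splits)

lemma fpar: "f 0 \<noteq> f 1 \<Longrightarrow> f s = f t \<longleftrightarrow> s mod 2 = t mod 2"
  using f01[of s] f01[of t] mod2[of s] mod2[of t] by (auto split: if_splits)

lemma f2step: "(f (t + 1) = f t) = (f 0 = f 1)"
proof (cases "f 0 = f 1")
  case True then show ?thesis using fconst[OF True, of t] fconst[OF True, of "t+1"] True by simp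
next
  case False
  have "(t + 1) mod 2 \<noteq> t mod 2" by presburger
  then show ?thesis using fpar[OF False] False by simp
qed

definition lolli where
  "lolli Q r \<longleftrightarrow> is_path V E Q \<and> last Q = c r \<and> (\<forall>q\<in>set (butlast Q). q \<notin> set C)"

lemma path_take: "is_path V E Q \<Longrightarrow> 0 < k \<Longrightarrow> is_path V E (take k Q)"
  unfolding is_path_def using walk_edges_take set_take_subset by fastforce

lemma path_drop: "is_path V E Q \<Longrightarrow> k < length Q \<Longrightarrow> is_path V E (drop k Q)"
  unfolding is_path_def using walk_edges_drop set_drop_subset by fastforce

lemma lolli_drop: "lolli Q r \<Longrightarrow> k < length Q \<Longrightarrow> lolli (drop k Q) r"
  unfolding lolli_def using path_drop[of Q k] set_drop_subset[of k "butlast Q"]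
  by (auto simp: butlast_drop last_drop)

lemma LL: "lolli Q r \<Longrightarrow> (hd Q \<in> A) = f (r + int (length Q) - 1)"
proof (induction "length Q" arbitrary: Q rule: less_induct)
  case less
  have Q: "is_path V E Q" "last Q = c r" "\<forall>q\<in>set (butlast Q). q \<notin> set C"
    using less.prems by (auto simp: lolli_def)
  have Qne: "Q \<noteq> []" using Q by (simp add: is_path_def)
  then have L: "length Q \<ge> 1" by (cases Q) auto
  show ?case
  proof (cases "length Q \<le> l + 1")
    case True
    define m where "m = l + 1 - length Q"
    have "(hd Q \<in> A) = f (last [r..r + int m])"
      by (rule GL[OF Q(1), where lo=r]) (use Q True ln L in \<open>auto simp: hd_upto walk_arc m_def\<close>)
    then have a: "(hd Q \<in> A) = f (r + int m)" by (simp add: last_upto)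
    have "f (r + int m) = f (r + 1 - int (length Q))"
      using W[of "r + 1 - int (length Q)"] True by (simp add: m_def algebra_simps of_nat_diff)
    also have "\<dots> = f (r + int (length Q) - 1)"
    proof -
      have "(r + 1 - int (length Q)) mod 2 = (r + int (length Q) - 1) mod 2" by presburger
      then show ?thesis using f2[of "r + 1 - int (length Q)"] f2[of "r + int (length Q) - 1"] by simp
    qed
    finally show ?thesis using a by simp
  next
    case False
    have p1: "is_path V E (take (l+1) Q)" using path_take[OF Q(1)] by simp
    have tk: "take (l+1) Q = take l Q @ [Q ! l]" using False by (simp add: take_Suc_conv_app_nth)
    have pl: "path_length (take (l+1) Q) = l" using False by (simp add: path_length_def)
    have h1: "hd (take (l+1) Q) = hd Q" using Qne by simp
    have "(hd Q \<in> A) = (Q ! l \<in> A)" using NG[OF p1 pl] h1 tk by simp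
    moreover have ld: "lolli (drop l Q) r" using lolli_drop[OF less.prems] False by simp
    moreover have "length (drop l Q) < length Q" using l1 False by simp
    ultimately have "(hd Q \<in> A) = f (r + int (length (drop l Q)) - 1)"
      using less.hyps[of "drop l Q"] False by (simp add: hd_drop_conv_nth)
    also have "\<dots> = f (r + int (length Q) - 1)"
      using W[of "r + int (length (drop l Q)) - 1"] False by (simp add: of_nat_diff algebra_simps)
    finally show ?thesis .
  qed
qed

lemma lolli_ex:
  assumes "v \<in> V"
  obtains Q r where "lolli Q r" "hd Q = v"
proof -
  have C0: "C ! 0 \<in> V" using CV Cne by (simp add: subset_iff)
  obtain p where p: "is_path V E p" "hd p = v" "last p = C ! 0" using conn assms C0
    by (auto simp: connected_graph_def)
  have "last p \<in> set C" using p(3) Cne by simp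
  from first_hit[OF p(1) this] obtain Q where Q: "is_path V E Q" "hd Q = v" "last Q \<in> set C"
    "\<forall>q\<in>set (butlast Q). q \<notin> set C" using p(2) by blast
  then obtain i where i: "i < n" "C ! i = last Q" by (auto simp: in_set_conv_nth)
  have "lolli Q (int i)" using Q i c_nat[of i] by (simp add: lolli_def)
  then show ?thesis using that Q(2) by blast
qed

lemma E1:
  assumes e: "E u v" and u: "u \<notin> set C"
  shows "((u \<in> A) = (v \<in> A)) = (f 0 = f 1)"
proof -
  have uv: "u \<in> V" "v \<in> V" "u \<noteq> v" using EV[OF e] e Eirr by auto
  obtain Q r where Q: "lolli Q r" "hd Q = v" using lolli_ex[OF uv(2)] by blast
  have QQ: "is_path V E Q" "last Q = c r" "\<forall>q\<in>set (butlast Q). q \<notin> set C"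
    using Q by (auto simp: lolli_def)
  have Qne: "Q \<noteq> []" using QQ by (simp add: is_path_def)
  show ?thesis
  proof (cases "u \<in> set Q")
    case False
    have "lolli (u # Q) r" using QQ Qne False u uv e Q(2)
      by (auto simp: lolli_def is_path_def walk_edges_Cons)
    from LL[OF this] LL[OF Q(1)] have "(u \<in> A) = f (r + int (length Q))" "(v \<in> A) = f (r + int (length Q) - 1)"
      using Q(2) by simp_all
    then show ?thesis using f2step[of "r + int (length Q) - 1"] by simp
  next
    case True
    then obtain s where s: "s < length Q" "Q ! s = u" by (auto simp: in_set_conv_nth)
    have s0: "s \<noteq> 0"
    proof
      assume "s = 0"
      then have "u = v" using s Q(2) Qne by (simp add: hd_conv_nth)
      then show False using uv by simp
    qed
    have lQ2: "lolli (drop s Q) r" using lolli_drop[OF Q(1) s(1)] .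
    have hQ2: "hd (drop s Q) = u" using s by (simp add: hd_drop_conv_nth)
    have dQ: "distinct Q" using QQ by (simp add: is_path_def)
    have "v \<in> set (take s Q)" using s0 Q(2) Qne by (cases Q; cases s) auto
    moreover have "distinct (take s Q @ drop s Q)" using dQ by simp
    then have "set (take s Q) \<inter> set (drop s Q) = {}" by (simp only: distinct_append)
    ultimately have vn: "v \<notin> set (drop s Q)" by blast
    have "length (butlast Q) > 0" using s s0 by simp
    then have bne: "butlast Q \<noteq> []" by (cases Q rule: rev_cases) auto
    have "hd Q = hd (butlast Q @ [last Q])" using Qne by simp
    also have "\<dots> = hd (butlast Q)" using bne by simp
    finally have "v \<in> set (butlast Q)" using Q(2) bne by simp
    then have vC: "v \<notin> set C" using QQ by blast
    have d2ne: "drop s Q \<noteq> []" using s by simp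
    have "lolli (v # drop s Q) r" using lQ2 d2ne vn vC uv Esym[OF e] hQ2
      by (auto simp: lolli_def is_path_def walk_edges_Cons)
    from LL[OF this] LL[OF lQ2] have "(v \<in> A) = f (r + int (length (drop s Q)))"
      "(u \<in> A) = f (r + int (length (drop s Q)) - 1)"
      using hQ2 by simp_all
    then show ?thesis using f2step[of "r + int (length (drop s Q)) - 1"] by auto
  qed
qed

lemma ClaimE:
  assumes e: "E u v"
  shows "((u \<in> A) = (v \<in> A)) = (f 0 = f 1)"
proof (cases "u \<in> set C \<and> v \<in> set C")
  case False
  then have "u \<notin> set C \<or> v \<notin> set C" by blast
  then show ?thesis
  proof
    assume "u \<notin> set C" then show ?thesis by (rule E1[OF e])
  next
    assume "v \<notin> set C"
    then have "((v \<in> A) = (u \<in> A)) = (f 0 = f 1)" by (rule E1[OF Esym[OF e]])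
    then show ?thesis by (cases "u \<in> A"; cases "v \<in> A") simp_all
  qed
next
  case True
  then obtain a' b' where ab: "a' < n" "C ! a' = u" "b' < n" "C ! b' = v" by (auto simp: in_set_conv_nth)
  define a where "a = int a'"
  define j where "j = (int b' - a) mod int n"
  have cu: "c a = u" using ab c_nat by (simp add: a_def)
  have j0: "0 \<le> j" "j < int n" using npos by (simp_all add: j_def)
  have cj: "c (a + j) = v"
  proof -
    have "c (a + j) = c (int b')" unfolding c_eq_iff j_def by (simp add: mod_add_right_eq)
    then show ?thesis using ab c_nat by simp
  qed
  have ee: "E (c a) (c (a + j))" using cu cj e by simp
  have "j \<noteq> 0" using ee Eirr by (metis add.right_neutral)
  define x where "x = max 0 (int l - int n + j)"
  have x0: "0 \<le> x" "int l - int n + j \<le> x" "x = 0 \<or> x = int l - int n + j" by (auto simp: x_def)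
  have xj: "x < j"
  proof (cases "x = 0")
    case True then show ?thesis using j0 \<open>j \<noteq> 0\<close> by linarith
  next
    case False then show ?thesis using x0(3) ln by linarith
  qed
  have xl: "x \<le> int l - 1"
  proof (cases "x = 0")
    case True then show ?thesis using l1 by linarith
  next
    case False then show ?thesis using x0(3) j0 by linarith
  qed
  have F: "f (a + x) = f (a + j + (int l - 1 - x))"
    by (rule F1[where x=x and y="int l - 1 - x", OF ee]) (use x0 xj xl in linarith)+
  show ?thesis
  proof (cases "f 0 = f 1")
    case True
    then show ?thesis using fconst[OF True, of a] fconst[OF True, of "a + j"] cu cj by (simp add: f_def)
  next
    case False
    have "f 0 = f (int l)" using W[of 0] by simp
    then have le: "0 mod 2 = int l mod 2" using fpar[OF False, of 0 "int l"] by simp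
    have "(a + x) mod 2 = (a + j + (int l - 1 - x)) mod 2" using F fpar[OF False, of "a + x" "a + j + (int l - 1 - x)"] by simp
    then have "a mod 2 \<noteq> (a + j) mod 2" using le by presburger
    then have "f a \<noteq> f (a + j)" using fpar[OF False, of a "a + j"] by simp
    then show ?thesis using False cu cj by (simp add: f_def)
  qed
qed

theorem contra: False
proof (cases "f 0 = f 1")
  case True
  obtain a b where ab: "a \<in> A" "b \<in> B" using Ane Bne by blast
  have "a \<in> V" "b \<in> V" using ab AB by auto
  then obtain p where p: "is_path V E p" "hd p = a" "last p = b" using conn by (auto simp: connected_graph_def)
  have "b \<notin> A" using ab disj by auto
  then obtain u v where "E u v" "u \<in> A" "v \<notin> A"
    using bichrom_edge[of E p A] p ab by (auto simp: is_path_def)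
  then show False using ClaimE[of u v] True by simp
next
  case False
  have "bipartite_with E A B"
    unfolding bipartite_with_def
  proof (intro allI impI)
    fix x y assume e: "E x y"
    then have "(x \<in> A) \<noteq> (y \<in> A)" using ClaimE[OF e] False by simp
    moreover have "x \<in> V" "y \<in> V" using EV[OF e] by auto
    ultimately show "x \<in> A \<and> y \<in> B \<or> x \<in> B \<and> y \<in> A" using AB disj by blast
  qed
  then show False using nbip by blast
qed

end

theorem lemma3p2:
  fixes V :: "'a set" and E :: "'a \<Rightarrow> 'a \<Rightarrow> bool" and A B :: "'a set" and C :: "'a list"
  assumes "simple_graph V E"
    and "connected_graph V E"
    and "\<forall>x\<in>V. degree V E x \<ge> 3"
    and "A \<union> B = V" and "A \<inter> B = {}" and "A \<noteq> {}" and "B \<noteq> {}"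
    and "is_cycle V E C"
    and "\<not> bipartite_with E A B"
  shows "\<forall>l::nat. 1 \<le> l \<and> l < length C \<longrightarrow> (\<exists>p. is_AB_path V E A B p \<and> path_length p = l)"
proof (intro allI impI)
  fix l :: nat
  assume l: "1 \<le> l \<and> l < length C"
  show "\<exists>p. is_AB_path V E A B p \<and> path_length p = l"
  proof (rule ccontr)
    assume no: "\<not> (\<exists>p. is_AB_path V E A B p \<and> path_length p = l)"
    have NG: "(hd p \<in> A) = (last p \<in> A)" if p: "is_path V E p" "path_length p = l" for p
    proof (rule ccontr)
      assume h: "(hd p \<in> A) \<noteq> (last p \<in> A)"
      have "hd p \<in> V" "last p \<in> V" using p(1) by (auto simp: is_path_def)
      then have "is_AB_path V E A B p" using h p(1) assms(4,5) by (auto simp: is_AB_path_def)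
      then show False using no p(2) by blast
    qed
    interpret setting V E A B C l
      using assms l NG by unfold_locales auto
    show False by (rule contra)
  qed
qed

end
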